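(* Let $n \ge 2$ be an integer and let $1 \le \underline{x}_i < \bar{x}_i$ for $i \in \{1,2\}$. For every $(x_1,x_2) \in [\underline{x}_1,\bar{x}_1] \times [\underline{x}_2,\bar{x}_2]$, the set $S(x)$ of optimal solutions of the problem $$\max_{y \in \mathbb{R}^{n+2}} \; y_1 - y_n\,(x_1 + x_2 - y_{n+1} - y_{n+2})$$ subject to $y_1 + y_n = \tfrac12$, $y_i^2 \le y_{i+1}$ for $i \in \{1,\dots,n-1\}$, $y_i \ge 0$ for $i \in \{1,\dots,n\}$, $y_{n+1} \in [0,x_1]$, $y_{n+2} \in [-x_2,x_2]$, is a singleton. *)

theory Defs
  imports Main "HOL-Library.FuncSet" Complex_Main
begin

definition vec_space :: "nat \<Rightarrow> (nat \<Rightarrow> real) set" where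
  "vec_space n = {1..n+2} \<rightarrow>\<^sub>E (UNIV :: real set)"

definition feasible :: "nat \<Rightarrow> real \<Rightarrow> real \<Rightarrow> (nat \<Rightarrow> real) \<Rightarrow> bool" where
  "feasible n x1 x2 y \<longleftrightarrow>
     y 1 + y n = 1/2 \<and>
     (\<forall>i\<in>{1..n-1}. (y i)^2 \<le> y (i+1)) \<and>
     (\<forall>i\<in>{1..n}. y i \<ge> 0) \<and>
     y (n+1) \<in> {0..x1} \<and>
     y (n+2) \<in> {-x2..x2}"

definition objective :: "nat \<Rightarrow> real \<Rightarrow> real \<Rightarrow> (nat \<Rightarrow> real) \<Rightarrow> real" where
  "objective n x1 x2 y = y 1 - y n * (x1 + x2 - y (n+1) - y (n+2))"

definition optimal_set :: "nat \<Rightarrow> real \<Rightarrow> real \<Rightarrow> (nat \<Rightarrow> real) set" where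
  "optimal_set n x1 x2 =
     {y \<in> vec_space n. feasible n x1 x2 y \<and>
        (\<forall>z\<in>vec_space n. feasible n x1 x2 z \<longrightarrow> objective n x1 x2 z \<le> objective n x1 x2 y)}"

end

theory Submission
  imports Defs
begin

lemma low_chain:
  assumes f: "feasible n x1 x2 z" and "n \<ge> 2"
  shows "k \<ge> 1 \<Longrightarrow> k \<le> n \<Longrightarrow> z 1 ^ (2^(k-1)) \<le> z k"
proof (induction k)
  case 0 then show ?case by simp
next
  case (Suc k)
  show ?case
  proof (cases "k = 0")
    case True then show ?thesis by simp
  next
    case False
    have ch: "(z k)^2 \<le> z (k+1)" using f False Suc.prems unfolding feasible_def by auto
    have nn: "z 1 \<ge> 0" "z k \<ge> 0" using f False Suc.prems \<open>n \<ge> 2\<close> unfolding feasible_def by auto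
    have ih: "z 1 ^ (2^(k-1)) \<le> z k" using Suc False by auto
    have "z 1 ^ (2^(Suc k - 1)) = (z 1 ^ (2^(k-1)))^2"
      using False by (cases k) (auto simp: power_mult[symmetric] mult.commute)
    also have "\<dots> \<le> (z k)^2" using ih nn by (intro power_mono) auto
    also have "\<dots> \<le> z (Suc k)" using ch by simp
    finally show ?thesis .
  qed
qed

lemma high_chain:
  assumes f: "feasible n x1 x2 z" and "n \<ge> 2" and t: "t \<ge> 0"
    and top: "z n \<le> t ^ (2^(n-1))"
  shows "j < n \<Longrightarrow> z (n - j) \<le> t ^ (2^(n-j-1))"
proof (induction j)
  case 0 then show ?case using top by simp
next
  case (Suc j)
  let ?k = "n - Suc j"
  have k1: "?k \<ge> 1" "?k \<le> n - 1" using Suc.prems by auto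
  have e: "?k + 1 = n - j" using Suc.prems by auto
  have ch: "(z ?k)^2 \<le> z (n - j)" using f k1 e unfolding feasible_def by (metis atLeastAtMost_iff)
  have nn: "z ?k \<ge> 0" using f k1 unfolding feasible_def by auto
  have ih: "z (n - j) \<le> t ^ (2^(n-j-1))" using Suc by auto
  have pe: "t ^ (2^(n-j-1)) = (t ^ (2^(n - Suc j - 1)))^2"
  proof -
    have "n - j - 1 = Suc (n - Suc j - 1)" using Suc.prems by auto
    then show ?thesis by (simp add: power_mult[symmetric] mult.commute)
  qed
  have "(z ?k)^2 \<le> (t ^ (2^(n - Suc j - 1)))^2" using ch ih pe by simp
  then show ?case using nn t by (meson power2_le_imp_le zero_le_power)
qed

theorem mainTheorem2:
  fixes n :: nat and xl1 xu1 xl2 xu2 x1 x2 :: real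
  assumes "n \<ge> 2"
    and "1 \<le> xl1" and "xl1 < xu1" and "1 \<le> xl2" and "xl2 < xu2"
    and "x1 \<in> {xl1..xu1}" and "x2 \<in> {xl2..xu2}"
  shows "\<exists>y. optimal_set n x1 x2 = {y}"
proof -
  define N :: nat where "N = 2^(n-1)"
  have N1: "N \<ge> 1" unfolding N_def by simp
  define g :: "real \<Rightarrow> real" where "g = (\<lambda>s. s + s ^ N)"
  have "\<exists>t. 0 \<le> t \<and> t \<le> 1/2 \<and> g t = 1/2"
  proof (rule IVT)
    show "g 0 \<le> 1/2" using N1 by (simp add: g_def power_0_left)
    show "1/2 \<le> g (1/2)" by (simp add: g_def)
    show "(0::real) \<le> 1/2" by simp
    show "\<forall>x. 0 \<le> x \<and> x \<le> 1/2 \<longrightarrow> isCont g x" unfolding g_def by (auto intro!: continuous_intros)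
  qed
  then obtain t :: real where t0: "0 \<le> t" and th: "t \<le> 1/2" and gt: "t + t^N = 1/2" unfolding g_def by auto
  have tpos: "t > 0" using t0 gt N1 by (cases "t = 0") (auto simp: power_0_left)
  have tNpos: "t^N > 0" using tpos by simp
  have x1p: "x1 \<ge> 0" "x2 \<ge> 0" using assms by auto
  have gmono: "a + a^N < b + b^N" if "0 \<le> a" "a < b" for a b :: real
    using that power_strict_mono[of a b N] N1 by auto
  have ub: "z 1 \<le> t" if "feasible n x1 x2 z" for z
  proof (rule ccontr)
    assume "\<not> z 1 \<le> t"
    then have "t + t^N < z 1 + z 1 ^ N" using gmono t0 by auto
    also have "z 1 ^ N \<le> z n" using low_chain[OF that assms(1), of n] assms(1) unfolding N_def by auto
    finally show False using that gt unfolding feasible_def by auto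
  qed
  have objle: "objective n x1 x2 z \<le> z 1" if "feasible n x1 x2 z" for z
  proof -
    have "z n \<ge> 0" using that assms(1) unfolding feasible_def by auto
    moreover have "x1 + x2 - z (n+1) - z (n+2) \<ge> 0" using that unfolding feasible_def by auto
    ultimately show ?thesis unfolding objective_def by (simp add: mult_nonneg_nonneg)
  qed
  define y where "y = restrict (\<lambda>i. if i \<le> n then t ^ (2^(i-1)) else if i = n+1 then x1 else x2) {1..n+2}"
  have yv: "y \<in> vec_space n" unfolding y_def vec_space_def by simp
  have y1: "y 1 = t" unfolding y_def using assms(1) by simp
  have yn: "y n = t^N" unfolding y_def N_def using assms(1) by simp
  have yfeas: "feasible n x1 x2 y"
    unfolding feasible_def
  proof (intro conjI ballI)
    show "y 1 + y n = 1/2" using y1 yn gt by simp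
  next
    fix i assume i: "i \<in> {1..n-1}"
    then have "y i = t^(2^(i-1))" "y (i+1) = t^(2^i)" unfolding y_def by auto
    moreover have "(t^(2^(i-1)))^2 = t^(2^i)" using i
      by (cases i) (auto simp: power_mult[symmetric] mult.commute)
    ultimately show "(y i)^2 \<le> y (i+1)" by simp
  next
    fix i assume i: "i \<in> {1..n}"
    then show "y i \<ge> 0" unfolding y_def using t0 by auto
  next
    show "y (n+1) \<in> {0..x1}" unfolding y_def using x1p by auto
    show "y (n+2) \<in> {-x2..x2}" unfolding y_def using x1p by auto
  qed
  have yobj: "objective n x1 x2 y = t" unfolding objective_def y_def using assms(1) by simp
  show ?thesis
  proof (intro exI equalityI subsetI)
    fix w assume "w \<in> {y}"
    then show "w \<in> optimal_set n x1 x2" unfolding optimal_set_def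
      using yv yfeas yobj objle ub by fastforce
  next
    fix w assume "w \<in> optimal_set n x1 x2"
    then have wv: "w \<in> vec_space n" and wf: "feasible n x1 x2 w"
      and wo: "objective n x1 x2 w \<ge> t" unfolding optimal_set_def using yv yfeas yobj by auto
    have w1: "w 1 = t" using objle[OF wf] ub[OF wf] wo by auto
    have wn: "w n = t^N" using wf w1 gt unfolding feasible_def by auto
    have "w n * (x1 + x2 - w (n+1) - w (n+2)) = 0"
      using wo objle[OF wf] w1 unfolding objective_def by auto
    then have "x1 + x2 - w (n+1) - w (n+2) = 0" using wn tNpos by (metis less_irrefl mult_eq_0_iff)
    then have wa: "w (n+1) = x1" "w (n+2) = x2" using wf unfolding feasible_def by auto
    have wk: "w k = t ^ (2^(k-1))" if "k \<ge> 1" "k \<le> n" for k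
    proof -
      have "w k \<ge> t ^ (2^(k-1))" using low_chain[OF wf assms(1) that] w1 by simp
      moreover have "w (n - (n-k)) \<le> t ^ (2^(n-(n-k)-1))"
        using high_chain[OF wf assms(1) t0, of "n-k"] wn that unfolding N_def by auto
      ultimately show ?thesis using that by auto
    qed
    have "w = y"
    proof (rule extensionalityI[of _ "{1..n+2}"])
      show "w \<in> extensional {1..n+2}" using wv unfolding vec_space_def by (simp add: PiE_def)
      show "y \<in> extensional {1..n+2}" unfolding y_def by simp
      fix i assume i: "i \<in> {1..n+2}"
      then consider "i \<le> n" | "i = n+1" | "i = n+2" by fastforce
      then show "w i = y i" using i wk wa unfolding y_def by cases auto
    qed
    then show "w \<in> {y}" by simp
  qed
qed

end
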